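(* Let $X$ be a $2$-valued group such that $\operatorname{inv}(a)=a$ for every $a\in X$. Then for every $x\in X$ and every $r\in\mathbb{N}$, $|\operatorname{Set}(x^{*r})|\le r(r+1)$. In particular the growth function of the dynamic $T_x$ (generated by powers of $x$) has polynomial growth.
   Context: A $2$-valued group is a set $X$ with an associative multiplication $*:X\times X\to\operatorname{Sym}^2X$ (values are unordered pairs with multiplicity), extended elementwise to multi-sets, with unit $e$ satisfying $e*x=x*e=[x,x]$ and an inverse map $\operatorname{inv}$ with $e\in\operatorname{inv}(x)*x$ and $e\in x*\operatorname{inv}(x)$. For a multi-set $M$, $\operatorname{Set}(M)$ is the set of its distinct elements; $x^{*r}=x*\dots*x$ ($r$ factors). The dynamic $T_x$ is $T_x(y)=y*x$, and its growth function measures $|\operatorname{Set}|$ of its iterates. *)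

theory Defs
  imports Main "HOL-Library.Multiset"
begin

text \<open>Multiplication of a 2-valued group: mul x y is an unordered pair with
multiplicity, i.e. a multiset of size 2. Extension to multisets, elementwise.\<close>

definition mmul :: "('a \<Rightarrow> 'a \<Rightarrow> 'a multiset) \<Rightarrow> 'a multiset \<Rightarrow> 'a multiset \<Rightarrow> 'a multiset" where
  "mmul mul M N = (\<Sum>x\<in>#M. \<Sum>y\<in>#N. mul x y)"

definition two_valued_group ::
  "'a set \<Rightarrow> ('a \<Rightarrow> 'a \<Rightarrow> 'a multiset) \<Rightarrow> 'a \<Rightarrow> ('a \<Rightarrow> 'a) \<Rightarrow> bool" where
  "two_valued_group X mul e iv \<longleftrightarrow>
     e \<in> X \<and> (\<forall>x\<in>X. iv x \<in> X) \<and>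
     (\<forall>x\<in>X. \<forall>y\<in>X. size (mul x y) = 2 \<and> set_mset (mul x y) \<subseteq> X) \<and>
     (\<forall>x\<in>X. \<forall>y\<in>X. \<forall>z\<in>X. mmul mul (mul x y) {#z#} = mmul mul {#x#} (mul y z)) \<and>
     (\<forall>x\<in>X. mul e x = {#x, x#} \<and> mul x e = {#x, x#}) \<and>
     (\<forall>x\<in>X. e \<in># mul (iv x) x \<and> e \<in># mul x (iv x))"

text \<open>Powers x^{*r} = x * ... * x (r factors), for r \<ge> 1. The value at r = 0 is an
unused convention.\<close>

fun starpow :: "('a \<Rightarrow> 'a \<Rightarrow> 'a multiset) \<Rightarrow> 'a \<Rightarrow> nat \<Rightarrow> 'a multiset" where
  "starpow mul x 0 = {#}"
| "starpow mul x (Suc 0) = {#x#}"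
| "starpow mul x (Suc (Suc n)) = mmul mul (starpow mul x (Suc n)) {#x#}"

end

theory Submission imports Defs "HOL-Library.Poly_Mapping" begin

definition ms :: "'a multiset \<Rightarrow> 'a \<Rightarrow>\<^sub>0 int" where
  "ms M = sum_mset (image_mset frag_of M)"

lemma ms_empty [simp]: "ms {#} = 0" by (simp add: ms_def)
lemma ms_add_mset [simp]: "ms (add_mset a M) = frag_of a + ms M" by (simp add: ms_def)
lemma ms_plus [simp]: "ms (M + N) = ms M + ms N" by (simp add: ms_def)
lemma ms_single: "ms {#a#} = frag_of a" by simp

lemma lookup_ms: "Poly_Mapping.lookup (ms M) z = int (count M z)"
  by (induction M) (auto simp: lookup_add)

lemma keys_ms [simp]: "Poly_Mapping.keys (ms M) = set_mset M"
  by (auto simp: in_keys_iff lookup_ms)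

lemma card_set_mset_le_size: "card (set_mset M) \<le> size M"
proof (induction M)
  case (add x M)
  then show ?case by (simp add: card_insert_if)
qed simp

definition pm :: "('a \<Rightarrow> 'a \<Rightarrow> 'a multiset) \<Rightarrow> ('a \<Rightarrow>\<^sub>0 int) \<Rightarrow> ('a \<Rightarrow>\<^sub>0 int) \<Rightarrow> ('a \<Rightarrow>\<^sub>0 int)" where
  "pm mul f g = frag_extend (\<lambda>a. frag_extend (\<lambda>b. ms (mul a b)) g) f"

lemma frag_extend_fun_diff:
  "frag_extend (\<lambda>a. A a - B a) f = frag_extend A f - frag_extend B f"
proof -
  show ?thesis using subset_UNIV
    by (induction f rule: frag_induction) (auto simp: frag_extend_diff)
qed

lemma frag_extend_fun_add:
  "frag_extend (\<lambda>a. A a + B a) f = frag_extend A f + frag_extend B f"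
proof -
  show ?thesis using subset_UNIV
    by (induction f rule: frag_induction) (auto simp: frag_extend_diff)
qed

lemma frag_extend_fun_0: "frag_extend (\<lambda>a. 0) f = 0"
  by (simp add: frag_extend_eq_0)

lemma pm_0_1 [simp]: "pm mul 0 g = 0" by (simp add: pm_def)
lemma pm_0_2 [simp]: "pm mul f 0 = 0" by (simp add: pm_def frag_extend_fun_0)
lemma pm_diff1: "pm mul (f - f') g = pm mul f g - pm mul f' g" by (simp add: pm_def frag_extend_diff)
lemma pm_add1: "pm mul (f + f') g = pm mul f g + pm mul f' g" by (simp add: pm_def frag_extend_add)
lemma pm_diff2: "pm mul f (g - g') = pm mul f g - pm mul f g'"
  by (simp add: pm_def frag_extend_diff frag_extend_fun_diff)
lemma pm_add2: "pm mul f (g + g') = pm mul f g + pm mul f g'"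
  by (simp add: pm_def frag_extend_add frag_extend_fun_add)
lemma pm_cmul1: "pm mul (frag_cmul c f) g = frag_cmul c (pm mul f g)"
  by (simp add: pm_def frag_extend_cmul)
lemma pm_sum1: "finite I \<Longrightarrow> pm mul (\<Sum>i\<in>I. h i) g = (\<Sum>i\<in>I. pm mul (h i) g)"
  by (simp add: pm_def frag_extend_sum o_def)
lemma pm_of_of [simp]: "pm mul (frag_of a) (frag_of b) = ms (mul a b)"
  by (simp add: pm_def)

lemma pm_of_ms: "pm mul (frag_of a) (ms N) = ms (\<Sum>y\<in>#N. mul a y)"
  by (induction N) (auto simp: pm_def frag_extend_add)

lemma pm_ms: "pm mul (ms M) (ms N) = ms (mmul mul M N)"
  by (induction M) (auto simp: mmul_def pm_add1 pm_of_ms)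

lemma keys_pm: "Poly_Mapping.keys (pm mul f g) \<subseteq> (\<Union>a\<in>Poly_Mapping.keys f. \<Union>b\<in>Poly_Mapping.keys g. set_mset (mul a b))"
  unfolding pm_def using keys_frag_extend
  by (smt (verit, ccfv_SIG) UN_iff keys_ms subset_iff)


fun dk :: "('a \<Rightarrow> 'a \<Rightarrow> 'a multiset) \<Rightarrow> 'a \<Rightarrow> 'a \<Rightarrow> nat \<Rightarrow> 'a \<Rightarrow>\<^sub>0 int" where
  "dk mul e x 0 = frag_of e"
| "dk mul e x (Suc 0) = frag_of x"
| "dk mul e x (Suc (Suc n)) = pm mul (frag_of x) (dk mul e x (Suc n)) - dk mul e x n"

locale tvg =
  fixes X :: "'a set" and mul e iv x
  assumes G: "two_valued_group X mul e iv" and I: "\<forall>a\<in>X. iv a = a" and xX: "x \<in> X"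
begin

abbreviation D where "D \<equiv> dk mul e x"

lemma eX: "e \<in> X" using G by (simp add: two_valued_group_def)

lemma closed: "a \<in> X \<Longrightarrow> b \<in> X \<Longrightarrow> set_mset (mul a b) \<subseteq> X"
  using G by (simp add: two_valued_group_def)

lemma size2: "a \<in> X \<Longrightarrow> b \<in> X \<Longrightarrow> size (mul a b) = 2"
  using G by (simp add: two_valued_group_def)

lemma assoc_el: "a \<in> X \<Longrightarrow> b \<in> X \<Longrightarrow> c \<in> X \<Longrightarrow>
   mmul mul (mul a b) {#c#} = mmul mul {#a#} (mul b c)"
  using G by (simp add: two_valued_group_def)

lemma unitl: "a \<in> X \<Longrightarrow> mul e a = {#a, a#}"
  using G by (simp add: two_valued_group_def)
lemma unitr: "a \<in> X \<Longrightarrow> mul a e = {#a, a#}"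
  using G by (simp add: two_valued_group_def)

lemma sq: assumes "a \<in> X" shows "\<exists>w\<in>X. mul a a = {#e, w#}"
proof -
  have "e \<in># mul a a" using G I assms by (auto simp: two_valued_group_def)
  then obtain R where R: "mul a a = add_mset e R" by (metis multi_member_split)
  have "size R = 1" using size2[OF assms assms] R by simp
  then obtain w where "R = {#w#}" by (metis One_nat_def size_1_singleton_mset)
  moreover have "w \<in> X" using closed[OF assms assms] R \<open>R = {#w#}\<close> by auto
  ultimately show ?thesis using R by auto
qed

lemma keys_pmX: "Poly_Mapping.keys f \<subseteq> X \<Longrightarrow> Poly_Mapping.keys g \<subseteq> X \<Longrightarrow> Poly_Mapping.keys (pm mul f g) \<subseteq> X"
  using keys_pm[of mul f g] closed by blast

lemma assoc:
  assumes f: "Poly_Mapping.keys f \<subseteq> X" and g: "Poly_Mapping.keys g \<subseteq> X" and h: "Poly_Mapping.keys h \<subseteq> X"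
  shows "pm mul (pm mul f g) h = pm mul f (pm mul g h)"
  using f
proof (induction f rule: frag_induction)
  case zero then show ?case by simp
next
  case (diff a b) then show ?case by (simp add: pm_diff1)
next
  case (one a)
  show ?case using g
  proof (induction g rule: frag_induction)
    case zero then show ?case by simp
  next
    case (diff u v) then show ?case by (simp add: pm_diff1 pm_diff2)
  next
    case (one b)
    show ?case using h
    proof (induction h rule: frag_induction)
      case zero then show ?case by simp
    next
      case (diff u v) then show ?case by (simp add: pm_diff2)
    next
      case (one c)
      have "pm mul (pm mul (frag_of a) (frag_of b)) (frag_of c) = pm mul (ms (mul a b)) (ms {#c#})"
        by simp
      also have "\<dots> = ms (mmul mul (mul a b) {#c#})" by (rule pm_ms)
      also have "\<dots> = ms (mmul mul {#a#} (mul b c))" using assoc_el \<open>a \<in> X\<close> \<open>b \<in> X\<close> \<open>c \<in> X\<close> by simp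
      also have "\<dots> = pm mul (ms {#a#}) (ms (mul b c))" by (rule pm_ms[symmetric])
      finally show ?case by simp
    qed
  qed
qed

lemma unit_r: "Poly_Mapping.keys f \<subseteq> X \<Longrightarrow> pm mul f (frag_of e) = f + f"
proof (induction f rule: frag_induction)
  case (one a) then show ?case by (simp add: unitr)
next
  case (diff a b) then show ?case by (simp add: pm_diff1)
qed simp

lemma unit_l: "Poly_Mapping.keys f \<subseteq> X \<Longrightarrow> pm mul (frag_of e) f = f + f"
proof (induction f rule: frag_induction)
  case (one a) then show ?case by (simp add: unitl)
next
  case (diff a b) then show ?case by (simp add: pm_diff2)
qed simp

lemma nat_cases3: obtains "n = 0" | "n = Suc 0" | k where "n = Suc (Suc k)"
  by (metis not0_implies_Suc)

lemma keysD: "Poly_Mapping.keys (D n) \<subseteq> X"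
proof (induction n rule: less_induct)
  case (less n)
  show ?case
  proof (cases n rule: nat_cases3)
    case 1 then show ?thesis using eX by simp
  next
    case 2 then show ?thesis using xX by simp
  next
    case (3 k)
    have "Poly_Mapping.keys (pm mul (frag_of x) (D (Suc k))) \<subseteq> X"
      using keys_pmX less 3 xX by simp
    moreover have "Poly_Mapping.keys (D k) \<subseteq> X" using less 3 by simp
    ultimately show ?thesis using 3 keys_diff[of "pm mul (frag_of x) (D (Suc k))" "D k"] by auto
  qed
qed

lemma commute: "pm mul (D m) (frag_of x) = pm mul (frag_of x) (D m)"
proof (induction m rule: less_induct)
  case (less m)
  show ?case
  proof (cases m rule: nat_cases3)
    case 1 then show ?thesis using xX by (simp add: unitl unitr)
  next
    case 2 then show ?thesis by simp
  next
    case (3 k)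
    have "pm mul (D m) (frag_of x) = pm mul (pm mul (frag_of x) (D (Suc k))) (frag_of x) - pm mul (D k) (frag_of x)"
      using 3 by (simp add: pm_diff1)
    also have "\<dots> = pm mul (frag_of x) (pm mul (D (Suc k)) (frag_of x)) - pm mul (frag_of x) (D k)"
      using assoc keysD xX less 3 by simp
    also have "\<dots> = pm mul (frag_of x) (pm mul (frag_of x) (D (Suc k))) - pm mul (frag_of x) (D k)"
      using less 3 by simp
    also have "\<dots> = pm mul (frag_of x) (D m)" using 3 by (simp add: pm_diff2)
    finally show ?thesis .
  qed
qed

lemma prod: "n \<le> m \<Longrightarrow> pm mul (D m) (D n) = D (m + n) + D (m - n)"
proof (induction n arbitrary: m rule: less_induct)
  case (less n)
  show ?case
  proof (cases n rule: nat_cases3)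
    case 1 then show ?thesis using keysD unit_r by simp
  next
    case 2
    then obtain m' where m: "m = Suc m'" using less by (cases m) auto
    show ?thesis using 2 m commute[of m] by simp
  next
    case (3 k)
    have IH1: "pm mul (D m) (frag_of x) = D (m + 1) + D (m - 1)"
      using less.IH[of 1 m] 3 less.prems by simp
    have "pm mul (D m) (D n) = pm mul (D m) (pm mul (frag_of x) (D (Suc k))) - pm mul (D m) (D k)"
      using 3 by (simp add: pm_diff2)
    also have "\<dots> = pm mul (pm mul (D m) (frag_of x)) (D (Suc k)) - pm mul (D m) (D k)"
      using assoc keysD xX by simp
    also have "\<dots> = pm mul (D (m + 1)) (D (Suc k)) + pm mul (D (m - 1)) (D (Suc k)) - pm mul (D m) (D k)"
      using IH1 by (simp add: pm_add1)
    also have "\<dots> = (D (m + 1 + Suc k) + D (m + 1 - Suc k)) + (D (m - 1 + Suc k) + D (m - 1 - Suc k))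
         - (D (m + k) + D (m - k))"
      using less.IH[of "Suc k" "m+1"] less.IH[of "Suc k" "m - 1"] less.IH[of k m] 3 less.prems by simp
    also have "\<dots> = D (m + n) + D (m - n)"
      using 3 less.prems by (simp add: Suc_diff_le)
    finally show ?thesis .
  qed
qed

lemma pow2_single: "\<exists>z\<in>X. D (2 ^ a) = frag_of z"
proof (induction a)
  case 0 then show ?case using xX by (intro bexI[of _ x]) simp_all
next
  case (Suc a)
  then obtain z where z: "z \<in> X" "D (2 ^ a) = frag_of z" by blast
  obtain w where w: "w \<in> X" "mul z z = {#e, w#}" using sq[OF z(1)] by blast
  have "pm mul (D (2 ^ a)) (D (2 ^ a)) = D (2 ^ a + 2 ^ a) + D 0"
    using prod[of "2 ^ a" "2 ^ a"] by simp
  then have "D (2 ^ Suc a) = ms (mul z z) - frag_of e" using z by (simp add: mult_2)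
  also have "\<dots> = frag_of w" using w by simp
  finally show ?case using w by blast
qed

lemma card_pm_single:
  assumes "z \<in> X" "Poly_Mapping.keys g \<subseteq> X"
  shows "card (Poly_Mapping.keys (pm mul (frag_of z) g)) \<le> 2 * card (Poly_Mapping.keys g)"
proof -
  have "card (Poly_Mapping.keys (pm mul (frag_of z) g)) \<le> card (\<Union>b\<in>Poly_Mapping.keys g. set_mset (mul z b))"
    by (rule card_mono) (use keys_pm[of mul "frag_of z" g] in auto)
  also have "\<dots> \<le> (\<Sum>b\<in>Poly_Mapping.keys g. card (set_mset (mul z b)))"
    by (rule card_UN_le) simp
  also have "\<dots> \<le> (\<Sum>b\<in>Poly_Mapping.keys g. 2)"
    by (rule sum_mono) (metis assms card_set_mset_le_size size2 subsetD)
  finally show ?thesis by simp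
qed

lemma cardD_pow: "1 \<le> k \<Longrightarrow> k \<le> 2 ^ a \<Longrightarrow> card (Poly_Mapping.keys (D k)) \<le> k"
proof (induction a arbitrary: k)
  case 0 then show ?case by simp
next
  case (Suc a)
  show ?case
  proof (cases "k \<le> 2 ^ a")
    case True then show ?thesis using Suc by simp
  next
    case False
    define j where "j = k - 2 ^ a"
    have k: "k = 2 ^ a + j" and j1: "1 \<le> j" and j2: "j \<le> 2 ^ a" using False Suc.prems by (auto simp: j_def)
    show ?thesis
    proof (cases "j = 2 ^ a")
      case True
      then have "k = 2 ^ Suc a" using k by simp
      then show ?thesis using pow2_single[of "Suc a"] Suc.prems by auto
    next
      case jne: False
      obtain z where z: "z \<in> X" "D (2 ^ a) = frag_of z" using pow2_single by blast
      have "pm mul (D (2 ^ a)) (D j) = D k + D (2 ^ a - j)" using prod[OF j2] k by simp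
      then have Dk: "D k = pm mul (frag_of z) (D j) - D (2 ^ a - j)" using z by (simp add: algebra_simps)
      have "card (Poly_Mapping.keys (D k)) \<le> card (Poly_Mapping.keys (pm mul (frag_of z) (D j)) \<union> Poly_Mapping.keys (D (2 ^ a - j)))"
        unfolding Dk by (rule card_mono) (auto simp: keys_diff)
      also have "\<dots> \<le> card (Poly_Mapping.keys (pm mul (frag_of z) (D j))) + card (Poly_Mapping.keys (D (2 ^ a - j)))"
        by (rule card_Un_le)
      also have "\<dots> \<le> 2 * j + (2 ^ a - j)"
      proof -
        have "card (Poly_Mapping.keys (D j)) \<le> j" using Suc.IH[of j] j1 j2 by simp
        moreover have "card (Poly_Mapping.keys (D (2 ^ a - j))) \<le> 2 ^ a - j"
          using Suc.IH[of "2 ^ a - j"] j1 j2 jne by simp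
        ultimately show ?thesis using card_pm_single[OF z(1) keysD[of j]] by linarith
      qed
      finally show ?thesis using k j2 by simp
    qed
  qed
qed

lemma cardD: "card (Poly_Mapping.keys (D k)) \<le> k + 1"
proof (cases "k = 0")
  case True then show ?thesis by simp
next
  case False
  have "k \<le> 2 ^ k" using less_exp[of k] by simp
  then show ?thesis using cardD_pow[of k k] False by simp
qed

definition Q :: "nat \<Rightarrow> ('a \<Rightarrow>\<^sub>0 int) \<Rightarrow> bool" where
  "Q r f \<longleftrightarrow> (\<exists>c. f = (\<Sum>k\<le>r. frag_cmul (c k) (D k)))"

lemma Q_0: "Q r 0"
  unfolding Q_def by (rule exI[of _ "\<lambda>_. 0"]) simp

lemma Q_add: "Q r f \<Longrightarrow> Q r g \<Longrightarrow> Q r (f + g)"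
  unfolding Q_def
proof (elim exE)
  fix c d assume "f = (\<Sum>k\<le>r. frag_cmul (c k) (D k))" "g = (\<Sum>k\<le>r. frag_cmul (d k) (D k))"
  then show "\<exists>c. f + g = (\<Sum>k\<le>r. frag_cmul (c k) (D k))"
    by (intro exI[of _ "\<lambda>k. c k + d k"]) (simp add: frag_cmul_distrib sum.distrib)
qed

lemma Q_cmul: "Q r f \<Longrightarrow> Q r (frag_cmul a f)"
  unfolding Q_def
proof (elim exE)
  fix c assume "f = (\<Sum>k\<le>r. frag_cmul (c k) (D k))"
  then show "\<exists>c. frag_cmul a f = (\<Sum>k\<le>r. frag_cmul (c k) (D k))"
    by (intro exI[of _ "\<lambda>k. a * c k"]) (simp add: frag_cmul_sum)
qed

lemma Q_D: "k \<le> r \<Longrightarrow> Q r (D k)"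
  unfolding Q_def
proof (intro exI[of _ "\<lambda>i. if i = k then 1 else 0"])
  assume "k \<le> r"
  have "(\<Sum>i\<le>r. frag_cmul (if i = k then 1 else 0) (D i)) = (\<Sum>i\<le>r. if i = k then D i else 0)"
    by (rule sum.cong) auto
  also have "\<dots> = D k" using \<open>k \<le> r\<close> by (simp add: sum.delta')
  finally show "D k = (\<Sum>i\<le>r. frag_cmul (if i = k then 1 else 0) (D i))" by simp
qed

lemma Q_sum: "finite K \<Longrightarrow> (\<And>k. k \<in> K \<Longrightarrow> Q r (g k)) \<Longrightarrow> Q r (\<Sum>k\<in>K. g k)"
  by (induction K rule: finite_induct) (auto simp: Q_0 Q_add)

lemma Q_step: "Q r f \<Longrightarrow> Q (Suc r) (pm mul f (frag_of x))"
proof -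
  assume "Q r f"
  then obtain c where f: "f = (\<Sum>k\<le>r. frag_cmul (c k) (D k))" unfolding Q_def by blast
  have "pm mul f (frag_of x) = (\<Sum>k\<le>r. frag_cmul (c k) (pm mul (D k) (frag_of x)))"
    unfolding f by (simp add: pm_sum1 pm_cmul1)
  moreover have "Q (Suc r) (frag_cmul (c k) (pm mul (D k) (frag_of x)))" if "k \<le> r" for k
  proof (cases k)
    case 0
    have eq: "pm mul (D k) (frag_of x) = D 1 + D 1" using 0 xX by (simp add: unitl)
    have "Q (Suc r) (D 1)" by (rule Q_D) simp
    then show ?thesis unfolding eq by (intro Q_cmul Q_add)
  next
    case (Suc k')
    have eq: "pm mul (D k) (frag_of x) = D (k + 1) + D (k - 1)"
      using prod[of 1 k] Suc by (simp del: dk.simps(3))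
    have Qs: "Q (Suc r) (D (k + 1) + D (k - 1))" using that by (intro Q_add Q_D) simp_all
    show ?thesis unfolding eq by (rule Q_cmul[OF Qs])
  qed
  ultimately show ?thesis
    using Q_sum[of "{..r}" "Suc r" "\<lambda>k. frag_cmul (c k) (pm mul (D k) (frag_of x))"] by simp
qed

lemma Q_keys: "Q r f \<Longrightarrow> Poly_Mapping.keys f \<subseteq> (\<Union>k\<le>r. Poly_Mapping.keys (D k))"
proof -
  assume "Q r f"
  then obtain c where f: "f = (\<Sum>k\<le>r. frag_cmul (c k) (D k))" unfolding Q_def by blast
  have "Poly_Mapping.keys f \<subseteq> (\<Union>k\<le>r. Poly_Mapping.keys (frag_cmul (c k) (D k)))"
    unfolding f by (rule keys_sum)
  also have "\<dots> \<subseteq> (\<Union>k\<le>r. Poly_Mapping.keys (D k))"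
    using keys_cmul by (intro UN_mono) auto
  finally show ?thesis .
qed

lemma Q_pow: "1 \<le> r \<Longrightarrow> Q r (ms (starpow mul x r))"
proof (induction r)
  case 0 then show ?case by simp
next
  case (Suc r)
  show ?case
  proof (cases r)
    case 0 then show ?thesis using Q_D[of 1 1] by simp
  next
    case (Suc r')
    have "ms (starpow mul x (Suc r)) = ms (mmul mul (starpow mul x r) {#x#})"
      using Suc by simp
    also have "\<dots> = pm mul (ms (starpow mul x r)) (ms {#x#})" by (rule pm_ms[symmetric])
    finally have "ms (starpow mul x (Suc r)) = pm mul (ms (starpow mul x r)) (frag_of x)" by simp
    then show ?thesis using Q_step Suc.IH Suc by simp
  qed
qed

lemma main: "1 \<le> r \<Longrightarrow> card (set_mset (starpow mul x r)) \<le> r * (r + 1)"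
proof -
  assume r: "1 \<le> r"
  show ?thesis
  proof (cases "r = 1")
    case True then show ?thesis by simp
  next
    case False
    have A: "2 * (\<Sum>k\<le>r. k + 1) = (r + 1) * (r + 2)" by (induction r) auto
    have B: "(r + 1) * (r + 2) \<le> (r + 1) * (2 * r)"
      using False r by (intro mult_le_mono2) simp
    have B': "(r + 1) * (2 * r) = 2 * (r * (r + 1))" by (simp add: algebra_simps)
    have "2 * (\<Sum>k\<le>r. k + 1) \<le> 2 * (r * (r + 1))" using A B B' by linarith
    then have C: "(\<Sum>k\<le>r. k + 1) \<le> r * (r + 1)" by simp
    have "card (set_mset (starpow mul x r)) \<le> card (\<Union>k\<le>r. Poly_Mapping.keys (D k))"
      using Q_keys[OF Q_pow[OF r]] by (intro card_mono) auto
    also have "\<dots> \<le> (\<Sum>k\<le>r. card (Poly_Mapping.keys (D k)))" by (rule card_UN_le) simp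
    also have "\<dots> \<le> (\<Sum>k\<le>r. k + 1)" by (rule sum_mono) (rule cardD)
    also have "\<dots> \<le> r * (r + 1)" by (rule C)
    finally show ?thesis .
  qed
qed

end

theorem mainTheorem7:
  fixes X :: "'a set" and mul :: "'a \<Rightarrow> 'a \<Rightarrow> 'a multiset" and e :: 'a and iv :: "'a \<Rightarrow> 'a"
  assumes "two_valued_group X mul e iv"
    and "\<forall>a\<in>X. iv a = a"
    and "x \<in> X" and "r \<ge> 1"
  shows "card (set_mset (starpow mul x r)) \<le> r * (r + 1)"
proof -
  interpret tvg X mul e iv x using assms by (unfold_locales) auto
  show ?thesis using main assms(4) by simp
qed

end
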